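(* Let $f$ be a quadratic rational map. If there exists $k\in\mathbb{N}$ such that $\mathrm{Deck}(f^k)\cong V_4$ (the Klein four-group), then the minimal such $k$ is $k=2$.
   Context: $\mathrm{Deck}(F)=\{\tau \text{ Möbius} : F\circ\tau=F\}$; $f^k$ is the $k$-th iterate. *)

theory Defs
  imports "HOL-Computational_Algebra.Polynomial" "HOL-Algebra.Elementary_Groups"
begin

text \<open>The Riemann sphere: None is the point at infinity.\<close>
type_synonym rsphere = "complex option"

fun rat_eval :: "complex poly \<Rightarrow> complex poly \<Rightarrow> rsphere \<Rightarrow> rsphere" where
  "rat_eval p q (Some z) = (if poly q z = 0 then None else Some (poly p z / poly q z))"
| "rat_eval p q None = (if degree p > degree q then None
      else if degree p = degree q then Some (lead_coeff p / lead_coeff q) else Some 0)"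

definition rat_map_deg :: "nat \<Rightarrow> (rsphere \<Rightarrow> rsphere) \<Rightarrow> bool" where
  "rat_map_deg d F \<longleftrightarrow> (\<exists>p q. q \<noteq> 0 \<and> coprime p q \<and> max (degree p) (degree q) = d
                              \<and> F = rat_eval p q)"

definition mobius :: "(rsphere \<Rightarrow> rsphere) \<Rightarrow> bool" where
  "mobius \<tau> \<longleftrightarrow> rat_map_deg 1 \<tau>"

definition Deck :: "(rsphere \<Rightarrow> rsphere) \<Rightarrow> (rsphere \<Rightarrow> rsphere) set" where
  "Deck F = {\<tau>. mobius \<tau> \<and> F \<circ> \<tau> = F}"

definition deck_group :: "(rsphere \<Rightarrow> rsphere) \<Rightarrow> (rsphere \<Rightarrow> rsphere) monoid" where
  "deck_group F = \<lparr>carrier = Deck F, monoid.mult = (\<circ>), one = id\<rparr>"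

definition klein_four :: "(int \<times> int) monoid" where
  "klein_four = integer_mod_group 2 \<times>\<times> integer_mod_group 2"

end

theory Submission
  imports Defs "HOL-Computational_Algebra.Fundamental_Theorem_Algebra"
begin


definition pt :: "complex \<Rightarrow> complex \<Rightarrow> rsphere" where
  "pt x y = (if y = 0 then None else Some (x / y))"

lemma pt_eq:
  assumes "(x,y) \<noteq> (0,0)" "(u,v) \<noteq> (0,0)"
  shows "pt x y = pt u v \<longleftrightarrow> x * v = y * u"
  using assms by (auto simp: pt_def field_simps)

lemma pt_scale: "k \<noteq> 0 \<Longrightarrow> pt (k*x) (k*y) = pt x y"
  by (auto simp: pt_def)

lemma pt_rep: "\<exists>x y. (x,y) \<noteq> (0,0) \<and> s = pt x y"
proof (cases s)
  case None thus ?thesis by (intro exI[of _ 1] exI[of _ 0]) (auto simp: pt_def)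
next
  case (Some z) thus ?thesis by (intro exI[of _ z] exI[of _ 1]) (auto simp: pt_def)
qed

lemma fun_eq_pt:
  assumes "\<And>x y. (x,y) \<noteq> (0,0) \<Longrightarrow> F (pt x y) = G (pt x y)"
  shows "F = G"
proof
  fix s show "F s = G s" using pt_rep[of s] assms by auto
qed

definition hev :: "nat \<Rightarrow> complex poly \<Rightarrow> complex \<Rightarrow> complex \<Rightarrow> complex" where
  "hev n P x y = (\<Sum>i\<le>n. coeff P i * x^i * y^(n-i))"

lemma hev_y:
  assumes "y \<noteq> 0" "degree P \<le> n"
  shows "hev n P x y = y^n * poly P (x/y)"
proof -
  have "poly P (x/y) = (\<Sum>i\<le>n. coeff P i * (x/y)^i)"
    unfolding poly_altdef
    by (rule sum.mono_neutral_left) (use assms in \<open>auto simp: coeff_eq_0\<close>)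
  also have "y^n * \<dots> = (\<Sum>i\<le>n. coeff P i * x^i * y^(n-i))"
    unfolding sum_distrib_left
  proof (rule sum.cong)
    fix i assume "i \<in> {..n}"
    hence "y^n = y^i * y^(n-i)" by (simp add: power_add[symmetric])
    thus "y ^ n * (coeff P i * (x / y) ^ i) = coeff P i * x ^ i * y ^ (n - i)"
      using assms by (simp add: power_divide field_simps)
  qed simp
  finally show ?thesis by (simp add: hev_def)
qed

lemma hev_1: "degree P \<le> n \<Longrightarrow> hev n P x 1 = poly P x"
  using hev_y[of 1 P n x] by simp

lemma hev_0: "hev n P x 0 = coeff P n * x^n"
proof -
  have "hev n P x 0 = (\<Sum>i\<in>{n}. coeff P i * x^i * 0^(n-i))"
    unfolding hev_def by (rule sum.mono_neutral_right) auto
  thus ?thesis by simp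
qed

lemma hev_add: "hev n (P + Q) x y = hev n P x y + hev n Q x y"
  by (simp add: hev_def algebra_simps sum.distrib)

lemma hev_diff: "hev n (P - Q) x y = hev n P x y - hev n Q x y"
  by (simp add: hev_def algebra_simps sum_subtractf)

lemma hev_smult: "hev n (smult c P) x y = c * hev n P x y"
  by (simp add: hev_def algebra_simps sum_distrib_left)

lemma hev_zero [simp]: "hev n 0 x y = 0"
  by (simp add: hev_def)

lemma coeff_mult_top:
  fixes P Q :: "complex poly"
  assumes "degree P \<le> m" "degree Q \<le> n"
  shows "coeff (P * Q) (m + n) = coeff P m * coeff Q n"
proof -
  have "coeff (P*Q) (m+n) = (\<Sum>i\<le>m+n. coeff P i * coeff Q (m + n - i))"
    by (simp add: coeff_mult)
  also have "\<dots> = (\<Sum>i\<in>{m}. coeff P i * coeff Q (m + n - i))"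
  proof (rule sum.mono_neutral_right)
    show "\<forall>i\<in>{..m + n} - {m}. coeff P i * coeff Q (m + n - i) = 0"
    proof
      fix i assume i: "i \<in> {..m + n} - {m}"
      show "coeff P i * coeff Q (m + n - i) = 0"
      proof (cases "i < m")
        case True thus ?thesis using assms by (simp add: coeff_eq_0)
      next
        case False thus ?thesis using assms i by (simp add: coeff_eq_0)
      qed
    qed
  qed auto
  finally show ?thesis by simp
qed

lemma hev_mult:
  assumes "degree P \<le> m" "degree Q \<le> n"
  shows "hev (m+n) (P*Q) x y = hev m P x y * hev n Q x y"
proof (cases "y = 0")
  case True thus ?thesis
    using coeff_mult_top[OF assms] by (simp add: hev_0 power_add)
next
  case False
  have "degree (P*Q) \<le> m + n" using assms degree_mult_le[of P Q] by linarith
  thus ?thesis using False assms by (simp add: hev_y power_add)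
qed

definition hform :: "nat \<Rightarrow> (complex \<Rightarrow> complex \<Rightarrow> complex) \<Rightarrow> bool" where
  "hform n E \<longleftrightarrow> (\<exists>P. degree P \<le> n \<and> E = hev n P)"

lemma hform_hev: "degree P \<le> n \<Longrightarrow> hform n (hev n P)"
  by (auto simp: hform_def)

lemma hform_add: "hform n A \<Longrightarrow> hform n B \<Longrightarrow> hform n (\<lambda>x y. A x y + B x y)"
  unfolding hform_def
proof (elim exE conjE)
  fix P Q assume *: "degree P \<le> n" "A = hev n P" "degree Q \<le> n" "B = hev n Q"
  show "\<exists>R. degree R \<le> n \<and> (\<lambda>x y. A x y + B x y) = hev n R"
    using * by (intro exI[of _ "P+Q"]) (auto simp: hev_add degree_add_le fun_eq_iff)
qed

lemma hform_diff: "hform n A \<Longrightarrow> hform n B \<Longrightarrow> hform n (\<lambda>x y. A x y - B x y)"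
  unfolding hform_def
proof (elim exE conjE)
  fix P Q assume *: "degree P \<le> n" "A = hev n P" "degree Q \<le> n" "B = hev n Q"
  show "\<exists>R. degree R \<le> n \<and> (\<lambda>x y. A x y - B x y) = hev n R"
    using * by (intro exI[of _ "P-Q"]) (auto simp: hev_diff degree_diff_le fun_eq_iff)
qed

lemma hform_cmult: "hform n A \<Longrightarrow> hform n (\<lambda>x y. c * A x y)"
  unfolding hform_def
proof (elim exE conjE)
  fix P assume *: "degree P \<le> n" "A = hev n P"
  show "\<exists>R. degree R \<le> n \<and> (\<lambda>x y. c * A x y) = hev n R"
    using * by (intro exI[of _ "smult c P"]) (auto simp: hev_smult fun_eq_iff)
qed

lemma hform_mult: "hform m A \<Longrightarrow> hform n B \<Longrightarrow> hform (m+n) (\<lambda>x y. A x y * B x y)"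
  unfolding hform_def
proof (elim exE conjE)
  fix P Q assume *: "degree P \<le> m" "A = hev m P" "degree Q \<le> n" "B = hev n Q"
  show "\<exists>R. degree R \<le> m + n \<and> (\<lambda>x y. A x y * B x y) = hev (m + n) R"
    using * degree_mult_le[of P Q]
    by (intro exI[of _ "P*Q"]) (auto simp: hev_mult fun_eq_iff)
qed

lemma hform_one: "hform 0 (\<lambda>x y. 1)"
  unfolding hform_def by (intro exI[of _ 1]) (auto simp: hev_def fun_eq_iff)

lemma hform_zero: "hform n (\<lambda>x y. 0)"
  unfolding hform_def by (intro exI[of _ 0]) (auto simp: fun_eq_iff)

lemma hform_X: "hform 1 (\<lambda>x y. x)"
  unfolding hform_def by (intro exI[of _ "[:0,1:]"]) (auto simp: hev_def fun_eq_iff)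

lemma hform_Y: "hform 1 (\<lambda>x y. y)"
  unfolding hform_def by (intro exI[of _ "[:1:]"]) (auto simp: hev_def fun_eq_iff)

lemma hform_cong: "hform m A \<Longrightarrow> m = n \<Longrightarrow> hform n A" by simp

lemma hform_pow: "hform n A \<Longrightarrow> hform (n*k) (\<lambda>x y. A x y ^ k)"
proof (induction k)
  case 0 thus ?case using hform_one by simp
next
  case (Suc k)
  have "hform (n + n*k) (\<lambda>x y. A x y * A x y ^ k)"
    by (rule hform_mult) (use Suc in auto)
  thus ?case by (simp add: algebra_simps)
qed

lemma hform_sum:
  assumes "finite S" "\<And>i. i \<in> S \<Longrightarrow> hform n (E i)"
  shows "hform n (\<lambda>x y. \<Sum>i\<in>S. E i x y)"
  using assms
proof (induction S rule: finite_induct)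
  case empty thus ?case using hform_zero by simp
next
  case (insert a S)
  thus ?case by (simp add: hform_add)
qed

lemma hform_subst:
  assumes A: "hform m A" and C: "hform n C" and D: "hform n D"
  shows "hform (m*n) (\<lambda>x y. A (C x y) (D x y))"
proof -
  obtain P where P: "degree P \<le> m" "A = hev m P" using A by (auto simp: hform_def)
  have "hform (m*n) (\<lambda>x y. \<Sum>i\<le>m. coeff P i * C x y ^ i * D x y ^ (m-i))"
  proof (rule hform_sum)
    fix i assume i: "i \<in> {..m}"
    have "hform (n*i + n*(m-i)) (\<lambda>x y. C x y ^ i * D x y ^ (m-i))"
      by (rule hform_mult) (use C D hform_pow in auto)
    hence "hform (n*i + n*(m-i)) (\<lambda>x y. coeff P i * (C x y ^ i * D x y ^ (m-i)))"
      by (rule hform_cmult)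
    moreover have "n*i + n*(m-i) = m*n" using i by (simp add: algebra_simps flip: add_mult_distrib2)
    ultimately show "hform (m*n) (\<lambda>x y. coeff P i * C x y ^ i * D x y ^ (m-i))"
      by (simp add: mult.assoc)
  qed simp
  thus ?thesis by (simp add: P hev_def)
qed

definition Zs :: "(complex \<Rightarrow> complex \<Rightarrow> complex) \<Rightarrow> rsphere set" where
  "Zs E = {s. \<exists>x y. (x,y) \<noteq> (0,0) \<and> s = pt x y \<and> E x y = 0}"

lemma Zs_bound:
  assumes "hform n E"
  shows "(\<forall>x y. E x y = 0) \<or> (finite (Zs E) \<and> card (Zs E) \<le> n)"
proof -
  obtain P where P: "degree P \<le> n" "E = hev n P" using assms by (auto simp: hform_def)
  show ?thesis
  proof (cases "P = 0")
    case True thus ?thesis using P by simp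
  next
    case False
    let ?R = "{z. poly P z = 0}"
    let ?N = "(if coeff P n = 0 then {None} else {}) :: rsphere set"
    have sub: "Zs E \<subseteq> Some ` ?R \<union> ?N"
    proof
      fix s assume "s \<in> Zs E"
      then obtain x y where xy: "(x,y) \<noteq> (0,0)" "s = pt x y" "E x y = 0" by (auto simp: Zs_def)
      show "s \<in> Some ` ?R \<union> ?N"
      proof (cases "y = 0")
        case True
        hence "x \<noteq> 0" using xy by auto
        thus ?thesis using xy True P by (auto simp: pt_def hev_0)
      next
        case False
        thus ?thesis using xy P by (auto simp: pt_def hev_y)
      qed
    qed
    have finR: "finite ?R" using poly_roots_finite[OF False] .
    have cR: "card ?R \<le> degree P" using card_poly_roots_bound[OF False] .
    have fin: "finite (Some ` ?R \<union> ?N)" using finR by auto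
    have "card (Some ` ?R \<union> ?N) \<le> card (Some ` ?R) + card ?N" by (rule card_Un_le)
    also have "\<dots> \<le> card ?R + card ?N" using card_image_le[OF finR, of Some] by simp
    also have "\<dots> \<le> n"
    proof (cases "coeff P n = 0")
      case True
      hence "degree P \<noteq> n" using False by (metis leading_coeff_0_iff)
      hence "degree P < n" using P by simp
      thus ?thesis using cR True by simp
    next
      case False thus ?thesis using cR P by simp
    qed
    finally show ?thesis using sub fin by (meson card_mono finite_subset order_trans)
  qed
qed

lemma hform_has_zero:
  assumes "hform n E" "n \<ge> 1"
  shows "\<exists>x y. (x,y) \<noteq> (0,0) \<and> E x y = 0"
proof -
  obtain P where P: "degree P \<le> n" "E = hev n P" using assms by (auto simp: hform_def)
  show ?thesis
  proof (cases "coeff P n = 0")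
    case True thus ?thesis using P by (intro exI[of _ 1] exI[of _ 0]) (simp add: hev_0)
  next
    case False
    hence "degree P = n" using P by (metis le_antisym le_degree)
    hence "\<not> constant (poly P)" using assms constant_degree[of P] by simp
    then obtain z where "poly P z = 0" using fundamental_theorem_of_algebra by blast
    thus ?thesis using P by (intro exI[of _ z] exI[of _ 1]) (simp add: hev_1)
  qed
qed


lemma hev1_expand: "hev 1 P x y = coeff P 0 * y + coeff P 1 * x"
  by (simp add: hev_def)

lemma hev2_expand: "hev 2 P x y = coeff P 0 * y^2 + coeff P 1 * x * y + coeff P 2 * x^2"
  by (simp add: hev_def numeral_2_eq_2 atMost_Suc algebra_simps)

lemma no_common_root:
  fixes p q :: "complex poly"
  assumes "coprime p q" "poly p z = 0" "poly q z = 0"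
  shows False
proof -
  have "[:-z,1:] dvd p" "[:-z,1:] dvd q" using assms by (simp_all add: poly_eq_0_iff_dvd)
  hence "is_unit [:-z,1:]" using assms(1) coprime_common_divisor by blast
  thus False by (simp add: is_unit_iff_degree)
qed

lemma coprime_if_no_common_root:
  fixes p q :: "complex poly"
  assumes "\<And>z. poly p z = 0 \<Longrightarrow> poly q z = 0 \<Longrightarrow> False"
  shows "coprime p q"
  unfolding coprime_def
proof (intro allI impI)
  fix c assume c1: "c dvd p" and c2: "c dvd q"
  note c = c1 c2
  have "c \<noteq> 0" using c assms[of 0] by auto
  moreover have "degree c = 0"
  proof (rule ccontr)
    assume "degree c \<noteq> 0"
    hence "\<not> constant (poly c)" using constant_degree[of c] by simp
    then obtain z where "poly c z = 0" using fundamental_theorem_of_algebra by blast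
    hence "[:-z,1:] dvd c" by (simp add: poly_eq_0_iff_dvd)
    hence "[:-z,1:] dvd p" "[:-z,1:] dvd q" using c by (meson dvd_trans)+
    thus False using assms by (simp add: poly_eq_0_iff_dvd)
  qed
  ultimately show "is_unit c" by (simp add: is_unit_iff_degree)
qed

definition hrep :: "nat \<Rightarrow> (rsphere \<Rightarrow> rsphere) \<Rightarrow> (complex \<Rightarrow> complex \<Rightarrow> complex)
    \<Rightarrow> (complex \<Rightarrow> complex \<Rightarrow> complex) \<Rightarrow> bool" where
  "hrep n F A B \<longleftrightarrow> hform n A \<and> hform n B \<and>
     (\<forall>x y. (x,y) \<noteq> (0,0) \<longrightarrow> (A x y, B x y) \<noteq> (0,0) \<and> F (pt x y) = pt (A x y) (B x y))"

lemma rat_hrep: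
  assumes q: "q \<noteq> 0" and cp: "coprime p q" and d: "max (degree p) (degree q) = d"
  shows "hrep d (rat_eval p q) (hev d p) (hev d q)"
proof -
  have F: "hform d (hev d p)" "hform d (hev d q)" using d by (auto intro: hform_hev)
  have "(hev d p x y, hev d q x y) \<noteq> (0,0) \<and> rat_eval p q (pt x y) = pt (hev d p x y) (hev d q x y)"
    if xy: "(x,y) \<noteq> (0,0)" for x y
  proof (cases "y = 0")
    case False
    have dp: "degree p \<le> d" "degree q \<le> d" using d by auto
    have "\<not> (poly p (x/y) = 0 \<and> poly q (x/y) = 0)" using no_common_root[OF cp] by blast
    thus ?thesis using False dp by (auto simp: hev_y pt_def)
  next
    case True
    hence x: "x \<noteq> 0" using xy by auto
    consider "degree p > degree q" | "degree p = degree q" | "degree p < degree q" by linarith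
    thus ?thesis
    proof cases
      case 1
      hence "degree p = d" "coeff q d = 0" using d by (auto simp: coeff_eq_0)
      moreover have "p \<noteq> 0" using 1 by auto
      ultimately have "coeff p d \<noteq> 0" by auto
      thus ?thesis using True x 1 \<open>coeff q d = 0\<close> by (simp add: hev_0 pt_def)
    next
      case 2
      hence "degree p = d" "degree q = d" using d by auto
      moreover have "coeff q d \<noteq> 0" using q \<open>degree q = d\<close> by auto
      ultimately show ?thesis using True x q by (auto simp: hev_0 pt_def)
    next
      case 3
      hence "degree q = d" "coeff p d = 0" using d by (auto simp: coeff_eq_0)
      thus ?thesis using True x q 3 by (auto simp: hev_0 pt_def)
    qed
  qed
  thus ?thesis using F by (simp add: hrep_def)
qed

lemma hrep_eqI:
  assumes "hrep n F A B" "hrep m G A B"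
  shows "F = G"
  using assms by (intro fun_eq_pt) (auto simp: hrep_def)

lemma hrep1_mobius:
  assumes h: "hrep 1 F A B"
  shows "mobius F"
proof -
  obtain p where p: "degree p \<le> 1" "A = hev 1 p" using h by (auto simp: hrep_def hform_def)
  obtain q where q: "degree q \<le> 1" "B = hev 1 q" using h by (auto simp: hrep_def hform_def)
  have nz: "(A x y, B x y) \<noteq> (0,0)" if "(x,y) \<noteq> (0,0)" for x y using h that by (auto simp: hrep_def)
  have cp: "coprime p q"
  proof (rule coprime_if_no_common_root)
    fix z assume "poly p z = 0" "poly q z = 0"
    thus False using nz[of z 1] p q by (simp add: hev_1)
  qed
  have "max (degree p) (degree q) = 1"
  proof (rule ccontr)
    assume "max (degree p) (degree q) \<noteq> 1"
    hence "degree p = 0" "degree q = 0" using p q by auto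
    hence "coeff p 1 = 0" "coeff q 1 = 0" by (auto simp: coeff_eq_0)
    thus False using nz[of 1 0] p q by (simp add: hev_0)
  qed
  moreover have q0: "q \<noteq> 0"
  proof
    assume "q = 0"
    hence "is_unit p" using cp by simp
    hence "degree p = 0" using is_unit_iff_degree[of p] by (cases "p = 0") auto
    thus False using \<open>max (degree p) (degree q) = 1\<close> \<open>q = 0\<close> by simp
  qed
  moreover have "F = rat_eval p q"
  proof -
    have h': "hrep 1 F (hev 1 p) (hev 1 q)" using h p(2) q(2) by simp
    show ?thesis using hrep_eqI[OF h' rat_hrep[OF q0 cp \<open>max (degree p) (degree q) = 1\<close>]] .
  qed
  ultimately show ?thesis using cp unfolding mobius_def rat_map_deg_def by blast
qed

lemma mobius_hrep:
  assumes "mobius F" shows "\<exists>A B. hrep 1 F A B"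
  using assms rat_hrep unfolding mobius_def rat_map_deg_def by blast

lemma hrep_comp:
  assumes "hrep m F A B" "hrep n G C D"
  shows "hrep (m*n) (F \<circ> G) (\<lambda>x y. A (C x y) (D x y)) (\<lambda>x y. B (C x y) (D x y))"
  using assms unfolding hrep_def by (auto intro: hform_subst)

lemma hrep_agree_finite:
  assumes F: "hrep n F A B" and G: "hrep n G C D" and ne: "F \<noteq> G"
  shows "finite {s. F s = G s} \<and> card {s. F s = G s} \<le> n + n"
proof -
  let ?E = "\<lambda>x y. A x y * D x y - B x y * C x y"
  have hE: "hform (n+n) ?E"
    using F G by (auto simp: hrep_def intro!: hform_diff hform_mult)
  have sub: "{s. F s = G s} \<subseteq> Zs ?E"
  proof
    fix s assume s: "s \<in> {s. F s = G s}"
    obtain x y where xy: "(x,y) \<noteq> (0,0)" "s = pt x y" using pt_rep by blast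
    have "pt (A x y) (B x y) = pt (C x y) (D x y)" using s xy F G by (auto simp: hrep_def)
    hence "?E x y = 0" using xy F G pt_eq[of "A x y" "B x y" "C x y" "D x y"] by (auto simp: hrep_def)
    thus "s \<in> Zs ?E" using xy by (auto simp: Zs_def)
  qed
  have "\<not> (\<forall>x y. ?E x y = 0)"
  proof
    assume E0: "\<forall>x y. ?E x y = 0"
    have "F = G"
    proof (rule fun_eq_pt)
      fix x y :: complex assume xy: "(x,y) \<noteq> (0,0)"
      have "pt (A x y) (B x y) = pt (C x y) (D x y)"
        using E0 xy F G pt_eq[of "A x y" "B x y" "C x y" "D x y"] by (auto simp: hrep_def)
      thus "F (pt x y) = G (pt x y)" using xy F G by (auto simp: hrep_def)
    qed
    thus False using ne by simp
  qed
  hence "finite (Zs ?E) \<and> card (Zs ?E) \<le> n + n" using Zs_bound[OF hE] by blast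
  thus ?thesis using sub by (meson card_mono finite_subset order_trans)
qed

lemma hrep1_inj:
  assumes h: "hrep 1 F A B" shows "inj F"
proof -
  obtain p where p: "degree p \<le> 1" "A = hev 1 p" using h by (auto simp: hrep_def hform_def)
  obtain q where q: "degree q \<le> 1" "B = hev 1 q" using h by (auto simp: hrep_def hform_def)
  have nz: "(A x y, B x y) \<noteq> (0,0)" if "(x,y) \<noteq> (0,0)" for x y using h that by (auto simp: hrep_def)
  define a0 a1 b0 b1 where "a0 = coeff p 0" "a1 = coeff p 1" "b0 = coeff q 0" "b1 = coeff q 1"
  have A: "A x y = a0*y + a1*x" and B: "B x y = b0*y + b1*x" for x y
    unfolding a0_a1_b0_b1_def p(2) q(2) hev1_expand by simp_all
  have det: "a1*b0 - a0*b1 \<noteq> 0"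
  proof
    assume d: "a1*b0 - a0*b1 = 0"
    show False
    proof (cases "(b0, -b1) = (0,0)")
      case False
      thus False using nz[of b0 "-b1"] d by (auto simp: A B algebra_simps)
    next
      case b: True
      show False
      proof (cases "(a0, -a1) = (0,0)")
        case False
        thus False using nz[of a0 "-a1"] b by (auto simp: A B algebra_simps)
      next
        case True thus False using nz[of 1 0] b by (auto simp: A B)
      qed
    qed
  qed
  show ?thesis
  proof (rule injI)
    fix s t assume st: "F s = F t"
    obtain x y where xy: "(x,y) \<noteq> (0,0)" "s = pt x y" using pt_rep by blast
    obtain u v where uv: "(u,v) \<noteq> (0,0)" "t = pt u v" using pt_rep by blast
    have "pt (A x y) (B x y) = pt (A u v) (B u v)" using st xy uv h by (auto simp: hrep_def)
    hence "A x y * B u v = B x y * A u v" using pt_eq nz xy uv by blast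
    hence "(a1*b0 - a0*b1) * (x*v - y*u) = 0" by (simp add: A B algebra_simps)
    hence "x*v = y*u" using det by simp
    thus "s = t" using xy uv pt_eq by simp
  qed
qed

definition mob :: "complex \<Rightarrow> complex \<Rightarrow> complex \<Rightarrow> complex \<Rightarrow> rsphere \<Rightarrow> rsphere" where
  "mob a b c d s = (case s of None \<Rightarrow> pt a c | Some z \<Rightarrow> pt (a*z+b) (c*z+d))"

lemma mob_pt: "(x,y) \<noteq> (0,0) \<Longrightarrow> mob a b c d (pt x y) = pt (a*x+b*y) (c*x+d*y)"
proof (cases "y = 0")
  case True
  assume "(x,y) \<noteq> (0,0)"
  hence "x \<noteq> 0" using True by auto
  thus ?thesis using True pt_scale[of x a c] by (simp add: mob_def pt_def[of x 0] mult.commute)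
next
  case False
  have "pt (a*x+b*y) (c*x+d*y) = pt (y*(a*(x/y)+b)) (y*(c*(x/y)+d))"
    using False by (simp add: algebra_simps)
  also have "\<dots> = pt (a*(x/y)+b) (c*(x/y)+d)" using False by (rule pt_scale)
  finally show ?thesis using False by (simp add: mob_def pt_def[of x y])
qed

lemma hform_lin: "hform 1 (\<lambda>x y. a*x + b*y)"
  using hform_add[OF hform_cmult[OF hform_X] hform_cmult[OF hform_Y]] .

lemma mob_hrep:
  assumes "a*d - b*c \<noteq> 0"
  shows "hrep 1 (mob a b c d) (\<lambda>x y. a*x+b*y) (\<lambda>x y. c*x+d*y)"
  unfolding hrep_def
proof (intro conjI allI impI hform_lin)
  fix x y :: complex assume xy: "(x,y) \<noteq> (0,0)"
  show "mob a b c d (pt x y) = pt (a*x+b*y) (c*x+d*y)" using mob_pt[OF xy] .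
  show "(a*x+b*y, c*x+d*y) \<noteq> (0,0)"
  proof
    assume "(a*x+b*y, c*x+d*y) = (0,0)"
    hence e: "a*x+b*y = 0" "c*x+d*y = 0" by auto
    have "(a*d-b*c)*x = d*(a*x+b*y) - b*(c*x+d*y)" by (simp add: algebra_simps)
    hence "x = 0" using e assms by simp
    have "(a*d-b*c)*y = a*(c*x+d*y) - c*(a*x+b*y)" by (simp add: algebra_simps)
    hence "y = 0" using e assms by simp
    thus False using xy \<open>x = 0\<close> by simp
  qed
qed

lemma mobius_mob: "a*d - b*c \<noteq> 0 \<Longrightarrow> mobius (mob a b c d)"
  using hrep1_mobius mob_hrep by blast

lemma mobius_id: "mobius id"
proof -
  have "mob 1 0 0 1 = id"
    by (rule fun_eq_pt) (simp add: mob_pt)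
  thus ?thesis using mobius_mob[of 1 1 0 0] by simp
qed

lemma mobius_comp:
  assumes "mobius F" "mobius G" shows "mobius (F \<circ> G)"
proof -
  obtain A B where A: "hrep 1 F A B" using mobius_hrep[OF assms(1)] by blast
  obtain C D where C: "hrep 1 G C D" using mobius_hrep[OF assms(2)] by blast
  have "hrep (1*1) (F \<circ> G) (\<lambda>x y. A (C x y) (D x y)) (\<lambda>x y. B (C x y) (D x y))"
    by (rule hrep_comp[OF A C])
  thus ?thesis using hrep1_mobius by simp
qed




lemma infinite_rsphere: "infinite (UNIV :: rsphere set)"
proof
  assume "finite (UNIV :: rsphere set)"
  hence "finite (Some ` (UNIV :: complex set))" by (rule finite_subset[rotated]) auto
  hence "finite (UNIV :: complex set)" using finite_imageD inj_Some by blast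
  thus False using infinite_UNIV_char_0 by blast
qed

lemma avoid_finite: "finite (S :: rsphere set) \<Longrightarrow> \<exists>s. s \<notin> S"
  using infinite_rsphere by (metis UNIV_eq_I)

lemma interp3:
  assumes w: "w1 \<noteq> w2" "w1 \<noteq> w3" "w2 \<noteq> w3" and v: "v1 \<noteq> v2" "v1 \<noteq> v3" "v2 \<noteq> v3"
  shows "\<exists>M. mobius M \<and> M w1 = v1 \<and> M w2 = v2 \<and> M w3 = v3"
proof -
  obtain a1 b1 where W1: "(a1,b1) \<noteq> (0,0)" "w1 = pt a1 b1" using pt_rep by blast
  obtain a2 b2 where W2: "(a2,b2) \<noteq> (0,0)" "w2 = pt a2 b2" using pt_rep by blast
  obtain a3 b3 where W3: "(a3,b3) \<noteq> (0,0)" "w3 = pt a3 b3" using pt_rep by blast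
  obtain c1 d1 where V1: "(c1,d1) \<noteq> (0,0)" "v1 = pt c1 d1" using pt_rep by blast
  obtain c2 d2 where V2: "(c2,d2) \<noteq> (0,0)" "v2 = pt c2 d2" using pt_rep by blast
  obtain c3 d3 where V3: "(c3,d3) \<noteq> (0,0)" "v3 = pt c3 d3" using pt_rep by blast
  have dW: "a1*b2 - b1*a2 \<noteq> 0" using w(1) W1 W2 pt_eq[OF W1(1) W2(1)] by simp
  have l1: "a3*b2 - a2*b3 \<noteq> 0" using w(3) W3 W2 pt_eq[OF W2(1) W3(1)] by (simp add: algebra_simps)
  have l2: "a1*b3 - a3*b1 \<noteq> 0" using w(2) W1 W3 pt_eq[OF W1(1) W3(1)] by (simp add: algebra_simps)
  have dV: "c1*d2 - d1*c2 \<noteq> 0" using v(1) V1 V2 pt_eq[OF V1(1) V2(1)] by simp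
  have m1: "c3*d2 - c2*d3 \<noteq> 0" using v(3) V3 V2 pt_eq[OF V2(1) V3(1)] by (simp add: algebra_simps)
  have m2: "c1*d3 - c3*d1 \<noteq> 0" using v(2) V1 V3 pt_eq[OF V1(1) V3(1)] by (simp add: algebra_simps)
  define L1 where "L1 = a3*b2 - a2*b3"
  define L2 where "L2 = a1*b3 - a3*b1"
  define U1 where "U1 = c3*d2 - c2*d3"
  define U2 where "U2 = c1*d3 - c3*d1"
  define al where "al = U1*c1*L2*b2 - U2*c2*L1*b1"
  define be where "be = - U1*c1*L2*a2 + U2*c2*L1*a1"
  define ga where "ga = U1*d1*L2*b2 - U2*d2*L1*b1"
  define de where "de = - U1*d1*L2*a2 + U2*d2*L1*a1"
  have det_eq: "al*de - be*ga = (U1*U2*(c1*d2 - d1*c2)) * (L1*L2*(a1*b2 - b1*a2))"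
    unfolding al_def be_def ga_def de_def by algebra
  have det: "al*de - be*ga \<noteq> 0"
    unfolding det_eq using dW dV l1 l2 m1 m2 by (simp add: L1_def L2_def U1_def U2_def)
  let ?M = "mob al be ga de"
  have e1: "al*a1 + be*b1 = (U1*L2*(a1*b2 - b1*a2)) * c1" "ga*a1 + de*b1 = (U1*L2*(a1*b2 - b1*a2)) * d1"
    unfolding al_def be_def ga_def de_def by algebra+
  have e2: "al*a2 + be*b2 = (U2*L1*(a1*b2 - b1*a2)) * c2" "ga*a2 + de*b2 = (U2*L1*(a1*b2 - b1*a2)) * d2"
    unfolding al_def be_def ga_def de_def by algebra+
  have e3: "al*a3 + be*b3 = (L1*L2*(c1*d2 - d1*c2)) * c3" "ga*a3 + de*b3 = (L1*L2*(c1*d2 - d1*c2)) * d3"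
    unfolding al_def be_def ga_def de_def L1_def L2_def U1_def U2_def by algebra+
  have k1: "U1*L2*(a1*b2 - b1*a2) \<noteq> 0" using dW l2 m1 by (simp add: L2_def U1_def)
  have k2: "U2*L1*(a1*b2 - b1*a2) \<noteq> 0" using dW l1 m2 by (simp add: L1_def U2_def)
  have k3: "L1*L2*(c1*d2 - d1*c2) \<noteq> 0" using dV l1 l2 by (simp add: L1_def L2_def)
  have "?M w1 = v1" using W1 V1 mob_pt[OF W1(1)] e1 pt_scale[OF k1] by simp
  moreover have "?M w2 = v2" using W2 V2 mob_pt[OF W2(1)] e2 pt_scale[OF k2] by simp
  moreover have "?M w3 = v3" using W3 V3 mob_pt[OF W3(1)] e3 pt_scale[OF k3] by simp
  moreover have "mobius ?M" by (rule mobius_mob[OF det])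
  ultimately show ?thesis by blast
qed

lemma id_hrep: "hrep 1 id (\<lambda>x y. x) (\<lambda>x y. y)"
proof -
  have "mob 1 0 0 1 = id" by (rule fun_eq_pt) (simp add: mob_pt)
  thus ?thesis using mob_hrep[of 1 1 0 0] by simp
qed

lemma Deck_comp: "a \<in> Deck F \<Longrightarrow> b \<in> Deck F \<Longrightarrow> a \<circ> b \<in> Deck F"
  unfolding Deck_def using mobius_comp by (simp add: comp_assoc[symmetric])

lemma klein_carrier: "carrier klein_four = {(0,0),(0,1),(1,0),(1,1)}"
  by (auto simp: klein_four_def carrier_integer_mod_group)

lemma klein_mult: "(a,b) \<otimes>\<^bsub>klein_four\<^esub> (c,d) = ((a+c) mod 2, (b+d) mod 2)"
  by (simp add: klein_four_def DirProd_def)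

lemma klein_facts:
  assumes "u \<in> carrier klein_four" "v \<in> carrier klein_four"
  shows "u \<otimes>\<^bsub>klein_four\<^esub> v = v \<otimes>\<^bsub>klein_four\<^esub> u"
    and "u \<otimes>\<^bsub>klein_four\<^esub> u = (0,0)"
    and "u \<noteq> (0,0) \<Longrightarrow> v \<noteq> (0,0) \<Longrightarrow> u \<noteq> v \<Longrightarrow>
         u \<otimes>\<^bsub>klein_four\<^esub> v \<notin> {(0,0), u, v}"
  using assms unfolding klein_carrier by (auto simp: klein_mult)

lemma iso_props:
  assumes "deck_group F \<cong> klein_four"
  shows "finite (Deck F) \<and> card (Deck F) = 4 \<and> (\<forall>a\<in>Deck F. \<forall>b\<in>Deck F. a \<circ> b = b \<circ> a) \<and>
    (\<forall>H. H \<subseteq> Deck F \<longrightarrow> id \<in> H \<longrightarrow> (\<forall>a\<in>H. \<forall>b\<in>H. a \<circ> b \<in> H) \<longrightarrow> 3 \<le> card H \<longrightarrow> H = Deck F)"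
proof -
  obtain h where h: "h \<in> iso (deck_group F) klein_four" using assms by (auto simp: is_iso_def)
  have bij: "bij_betw h (Deck F) (carrier klein_four)" and
    hom: "\<And>a b. a \<in> Deck F \<Longrightarrow> b \<in> Deck F \<Longrightarrow> h (a \<circ> b) = h a \<otimes>\<^bsub>klein_four\<^esub> h b"
    using h by (auto simp: iso_def hom_def deck_group_def)
  have inj: "inj_on h (Deck F)" using bij bij_betw_def by blast
  have hin: "a \<in> Deck F \<Longrightarrow> h a \<in> carrier klein_four" for a using bij bij_betwE by blast
  have fin: "finite (Deck F)" using bij bij_betw_finite[of h "Deck F" "carrier klein_four"]
    by (simp add: klein_carrier)
  have c4: "card (Deck F) = 4" using bij_betw_same_card[OF bij] by (simp add: klein_carrier)
  have idD: "id \<in> Deck F" using mobius_id by (simp add: Deck_def)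
  have hid: "h id = (0,0)"
  proof -
    have "h id = h (id \<circ> id)" by simp
    also have "\<dots> = h id \<otimes>\<^bsub>klein_four\<^esub> h id" using hom[OF idD idD] .
    also have "\<dots> = (0,0)" using klein_facts(2)[OF hin[OF idD] hin[OF idD]] .
    finally show ?thesis .
  qed
  have comm: "\<forall>a\<in>Deck F. \<forall>b\<in>Deck F. a \<circ> b = b \<circ> a"
  proof (intro ballI)
    fix a b assume a: "a \<in> Deck F" and b: "b \<in> Deck F"
    have "h (a \<circ> b) = h (b \<circ> a)"
      using hom[OF a b] hom[OF b a] klein_facts(1)[OF hin[OF a] hin[OF b]] by simp
    thus "a \<circ> b = b \<circ> a" using inj Deck_comp[OF a b] Deck_comp[OF b a] inj_onD by metis
  qed
  have sub: "H = Deck F" if H: "H \<subseteq> Deck F" "id \<in> H" "\<forall>a\<in>H. \<forall>b\<in>H. a \<circ> b \<in> H" "3 \<le> card H" for H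
  proof -
    have finH: "finite H" using H(1) fin finite_subset by blast
    have "2 \<le> card (H - {id})" using H(2,4) finH by (simp add: card_Diff_singleton)
    then obtain a b where ab: "a \<in> H - {id}" "b \<in> H - {id}" "a \<noteq> b"
      by (metis card_le_Suc_iff numeral_2_eq_2 insertCI)
    have aD: "a \<in> Deck F" and bD: "b \<in> Deck F" using ab H(1) by auto
    have ha: "h a \<noteq> (0,0)" using ab hid inj_onD[OF inj _ aD idD] by (metis DiffD2 singletonI)
    have hb: "h b \<noteq> (0,0)" using ab hid inj_onD[OF inj _ bD idD] by (metis DiffD2 singletonI)
    have hab: "h a \<noteq> h b" using ab inj_onD[OF inj _ aD bD] by blast
    have "h (a \<circ> b) \<notin> {(0,0), h a, h b}"
      using hom[OF aD bD] klein_facts(3)[OF hin[OF aD] hin[OF bD] ha hb hab] by simp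
    hence n: "a \<circ> b \<noteq> id" "a \<circ> b \<noteq> a" "a \<circ> b \<noteq> b" using hid by auto
    have abH: "a \<circ> b \<in> H" using H(3) ab by blast
    have "{id, a, b, a \<circ> b} \<subseteq> H" using abH ab H(2) by blast
    moreover have "card {id, a, b, a \<circ> b} = 4" using n ab by auto
    ultimately have "4 \<le> card H" using card_mono[OF finH] by metis
    hence "card H = card (Deck F)" using c4 card_mono[OF fin H(1)] by simp
    thus "H = Deck F" using card_subset_eq[OF fin H(1)] by simp
  qed
  show ?thesis using fin c4 comm sub by blast
qed

lemma Deck_sub_Suc: "Deck (f ^^ n) \<subseteq> Deck (f ^^ Suc n)"
proof
  fix t assume "t \<in> Deck (f ^^ n)"
  hence "mobius t" "(f ^^ n) \<circ> t = f ^^ n" by (auto simp: Deck_def)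
  hence "f \<circ> ((f ^^ n) \<circ> t) = f \<circ> f ^^ n" by simp
  thus "t \<in> Deck (f ^^ Suc n)" using \<open>mobius t\<close> by (simp add: Deck_def comp_assoc)
qed

lemma Deck_mono: "m \<le> n \<Longrightarrow> Deck (f ^^ m) \<subseteq> Deck (f ^^ n)"
proof (induction n)
  case 0 thus ?case by simp
next
  case (Suc n)
  show ?case
  proof (cases "m = Suc n")
    case False
    hence "m \<le> n" using Suc by simp
    thus ?thesis using Suc.IH Deck_sub_Suc by blast
  qed simp
qed

locale quad =
  fixes p q :: "complex poly" and f :: "rsphere \<Rightarrow> rsphere"
  assumes q0: "q \<noteq> 0" and cp: "coprime p q" and deg: "max (degree p) (degree q) = 2"
    and fdef: "f = rat_eval p q"
begin

abbreviation "A \<equiv> hev 2 p"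
abbreviation "B \<equiv> hev 2 q"

lemma f_hrep: "hrep 2 f A B"
  using rat_hrep[OF q0 cp deg] fdef by simp

lemma f_nz: "(x,y) \<noteq> (0,0) \<Longrightarrow> (A x y, B x y) \<noteq> (0,0)"
  using f_hrep by (auto simp: hrep_def)

lemma f_pt: "(x,y) \<noteq> (0,0) \<Longrightarrow> f (pt x y) = pt (A x y) (B x y)"
  using f_hrep by (auto simp: hrep_def)

lemma nondeg:
  assumes uv: "(u,v) \<noteq> (0,0)"
  shows "\<not> (\<forall>x y. v * A x y - u * B x y = 0)"
proof
  assume H: "\<forall>x y. v * A x y - u * B x y = 0"
  have dp: "degree p \<le> 2" "degree q \<le> 2" using deg by auto
  have "poly (smult v p - smult u q) = poly 0"
  proof
    fix z show "poly (smult v p - smult u q) z = poly 0 z"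
      using H[rule_format, of z 1] dp by (simp add: hev_1)
  qed
  hence "smult v p - smult u q = 0" unfolding poly_eq_poly_eq_iff .
  hence E: "smult v p = smult u q" by simp
  show False
  proof (cases "v = 0")
    case True
    hence "u \<noteq> 0" using uv by auto
    thus False using E True q0 by simp
  next
    case False
    have "p = smult (inverse v) (smult v p)" using False by simp
    also have "\<dots> = smult (inverse v) (smult u q)" using E by simp
    also have "\<dots> = smult (u/v) q" by (simp add: divide_inverse mult.commute)
    finally have pe: "p = smult (u/v) q" .
    hence "q dvd p" by (simp add: dvd_smult)
    hence "is_unit q" using coprime_common_divisor[OF cp _ dvd_refl] by blast
    hence "degree q = 0" using q0 is_unit_iff_degree by blast
    moreover have "degree p = 0"
    proof -
      have "degree p \<le> degree q" using pe by simp
      thus ?thesis using \<open>degree q = 0\<close> by simp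
    qed
    ultimately show False using deg by simp
  qed
qed

lemma fiber:
  "finite {s. f s = w} \<and> card {s. f s = w} \<le> 2"
proof -
  obtain u v where uv: "(u,v) \<noteq> (0,0)" "w = pt u v" using pt_rep by blast
  let ?E = "\<lambda>x y. v * A x y - u * B x y"
  have hE: "hform 2 ?E" using f_hrep by (auto simp: hrep_def intro!: hform_diff hform_cmult)
  have sub: "{s. f s = w} \<subseteq> Zs ?E"
  proof
    fix s assume s: "s \<in> {s. f s = w}"
    obtain x y where xy: "(x,y) \<noteq> (0,0)" "s = pt x y" using pt_rep by blast
    have "pt (A x y) (B x y) = pt u v" using s xy uv f_pt by auto
    hence "A x y * v = B x y * u" using pt_eq f_nz[OF xy(1)] uv(1) by blast
    hence "?E x y = 0" by (simp add: algebra_simps)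
    thus "s \<in> Zs ?E" using xy by (auto simp: Zs_def)
  qed
  have "finite (Zs ?E) \<and> card (Zs ?E) \<le> 2" using Zs_bound[OF hE] nondeg[OF uv(1)] by blast
  thus ?thesis using sub by (meson card_mono finite_subset order_trans)
qed

lemma f_surj: "\<exists>s. f s = w"
proof -
  obtain u v where uv: "(u,v) \<noteq> (0,0)" "w = pt u v" using pt_rep by blast
  let ?E = "\<lambda>x y. v * A x y - u * B x y"
  have hE: "hform 2 ?E" using f_hrep by (auto simp: hrep_def intro!: hform_diff hform_cmult)
  obtain x y where xy: "(x,y) \<noteq> (0,0)" "?E x y = 0" using hform_has_zero[OF hE] by auto
  have "A x y * v = B x y * u" using xy(2) by (simp add: algebra_simps)
  hence "pt (A x y) (B x y) = pt u v" using pt_eq f_nz[OF xy(1)] uv(1) by blast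
  thus ?thesis using f_pt[OF xy(1)] uv by metis
qed

lemma deck_le2:
  assumes "t0 \<in> Deck f" "t1 \<in> Deck f" "t2 \<in> Deck f"
    and "t0 \<noteq> t1" "t0 \<noteq> t2" "t1 \<noteq> t2"
  shows False
proof -
  have mob: "mobius t0" "mobius t1" "mobius t2" and inv: "f \<circ> t0 = f" "f \<circ> t1 = f" "f \<circ> t2 = f"
    using assms by (auto simp: Deck_def)
  have fin: "finite {s. ti s = tj s}" if m1: "mobius ti" and m2: "mobius tj" and ne: "ti \<noteq> tj" for ti tj
  proof -
    obtain A1 B1 where h1: "hrep 1 ti A1 B1" using mobius_hrep[OF m1] by blast
    obtain A2 B2 where h2: "hrep 1 tj A2 B2" using mobius_hrep[OF m2] by blast
    show ?thesis by (rule conjunct1[OF hrep_agree_finite[OF h1 h2 ne]])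
  qed
  let ?Bad = "{s. t0 s = t1 s} \<union> {s. t0 s = t2 s} \<union> {s. t1 s = t2 s}"
  have "finite ?Bad"
    using fin[OF mob(1) mob(2) assms(4)] fin[OF mob(1) mob(3) assms(5)] fin[OF mob(2) mob(3) assms(6)]
    by (simp only: finite_Un)
  then have "\<exists>s. s \<notin> ?Bad" by (rule avoid_finite)
  then obtain s where s: "s \<notin> ?Bad" ..
  have "f (t0 s) = f s" "f (t1 s) = f s" "f (t2 s) = f s"
    using fun_cong[OF inv(1), of s] fun_cong[OF inv(2), of s] fun_cong[OF inv(3), of s] by simp_all
  hence sub: "{t0 s, t1 s, t2 s} \<subseteq> {x. f x = f s}" by blast
  have "card {t0 s, t1 s, t2 s} \<le> card {x. f x = f s}"
    using card_mono[OF conjunct1[OF fiber[of "f s"]] sub] .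
  hence "card {t0 s, t1 s, t2 s} \<le> 2" using fiber[of "f s"] by linarith
  moreover have "t0 s \<noteq> t1 s" "t0 s \<noteq> t2 s" "t1 s \<noteq> t2 s" using s by blast+
  hence "card {t0 s, t1 s, t2 s} = 3" by simp
  ultimately show False by simp
qed

definition "ca = coeff p 2"
definition "cb = coeff p 1"
definition "cc = coeff p 0"
definition "cd = coeff q 2"
definition "ce = coeff q 1"
definition "cg = coeff q 0"
definition "DD = (ca*cg-cc*cd)^2-(ca*ce-cb*cd)*(cb*cg-cc*ce)"

lemma A_expand: "A x y = cc*y^2 + cb*x*y + ca*x^2"
  by (simp add: hev2_expand ca_def cb_def cc_def)
lemma B_expand: "B x y = cg*y^2 + ce*x*y + cd*x^2"
  by (simp add: hev2_expand cd_def ce_def cg_def)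

definition "i1 x y = (cc*cd-ca*cg)*x + (cc*ce-cb*cg)*y"
definition "i2 x y = (ca*ce-cb*cd)*x + (ca*cg-cc*cd)*y"

lemma A_iota: "A (i1 x y) (i2 x y) = DD * A x y"
  unfolding A_expand i1_def i2_def DD_def by algebra
lemma B_iota: "B (i1 x y) (i2 x y) = DD * B x y"
  unfolding B_expand i1_def i2_def DD_def by algebra

lemma DD_nz: "DD \<noteq> 0"
proof
  assume D0: "DD = 0"
  have Z: "A (i1 x y) (i2 x y) = 0" "B (i1 x y) (i2 x y) = 0" for x y
    using A_iota B_iota D0 by simp_all
  show False
  proof (cases "(i1 1 0, i2 1 0) \<noteq> (0,0)")
    case True thus False using f_nz[OF True] Z by simp
  next
    case F1: False
    show False
    proof (cases "(i1 0 1, i2 0 1) \<noteq> (0,0)")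
      case True thus False using f_nz[OF True] Z by simp
    next
      case False
      hence r: "cc*cd = ca*cg" "ca*ce = cb*cd" "cc*ce = cb*cg" using F1 by (auto simp: i1_def i2_def)
      have AB: "ca * B x y = cd * A x y" for x y
        unfolding A_expand B_expand using r by (simp add: algebra_simps)
      have "ca \<noteq> 0 \<or> cd \<noteq> 0"
      proof (rule ccontr)
        assume "\<not> (ca \<noteq> 0 \<or> cd \<noteq> 0)"
        hence c2: "coeff p 2 = 0" "coeff q 2 = 0" by (auto simp: ca_def cd_def)
        have "degree p = 2 \<or> degree q = 2" using deg by linarith
        thus False
        proof
          assume dp: "degree p = 2"
          hence "p \<noteq> 0" by auto
          hence "coeff p (degree p) \<noteq> 0" by simp
          thus False using dp c2 by simp
        next
          assume dq: "degree q = 2"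
          hence "q \<noteq> 0" by auto
          hence "coeff q (degree q) \<noteq> 0" by simp
          thus False using dq c2 by simp
        qed
      qed
      have hA: "hform 2 A" "hform 2 B" using deg by (auto intro!: hform_hev)
      show False using \<open>ca \<noteq> 0 \<or> cd \<noteq> 0\<close>
      proof
        assume a: "ca \<noteq> 0"
        obtain x y where xy: "(x,y) \<noteq> (0,0)" "A x y = 0"
          using hform_has_zero[OF hA(1)] by auto
        hence "B x y = 0" using AB[of x y] a by simp
        thus False using f_nz[OF xy(1)] xy(2) by simp
      next
        assume d: "cd \<noteq> 0"
        obtain x y where xy: "(x,y) \<noteq> (0,0)" "B x y = 0"
          using hform_has_zero[OF hA(2)] by auto
        hence "A x y = 0" using AB[of x y] d by simp
        thus False using f_nz[OF xy(1)] xy(2) by simp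
      qed
    qed
  qed
qed

definition "iota = mob (cc*cd-ca*cg) (cc*ce-cb*cg) (ca*ce-cb*cd) (ca*cg-cc*cd)"

lemma iota_det: "(cc*cd-ca*cg)*(ca*cg-cc*cd) - (cc*ce-cb*cg)*(ca*ce-cb*cd) \<noteq> 0"
proof -
  have "(cc*cd-ca*cg)*(ca*cg-cc*cd) - (cc*ce-cb*cg)*(ca*ce-cb*cd) = - DD"
    unfolding DD_def by (simp add: algebra_simps power2_eq_square)
  thus ?thesis using DD_nz by simp
qed

lemma iota_hrep: "hrep 1 iota i1 i2"
  using mob_hrep[OF iota_det] unfolding iota_def i1_def[abs_def] i2_def[abs_def] .

lemma iota_mobius: "mobius iota"
  by (rule hrep1_mobius[OF iota_hrep])

lemma f_iota: "f \<circ> iota = f"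
proof (rule fun_eq_pt)
  fix x y :: complex assume xy: "(x,y) \<noteq> (0,0)"
  have nz: "(i1 x y, i2 x y) \<noteq> (0,0)" and ip: "iota (pt x y) = pt (i1 x y) (i2 x y)"
    using iota_hrep xy unfolding hrep_def by blast+
  have "(f \<circ> iota) (pt x y) = pt (DD * A x y) (DD * B x y)"
    using f_pt[OF nz] ip A_iota B_iota by simp
  also have "\<dots> = f (pt x y)" using pt_scale[OF DD_nz] f_pt[OF xy] by simp
  finally show "(f \<circ> iota) (pt x y) = f (pt x y)" .
qed

lemma iota_Deck: "iota \<in> Deck f"
  using iota_mobius f_iota by (simp add: Deck_def)

lemma iota_ne_id: "iota \<noteq> id"
proof
  assume I: "iota = id"
  have e: "i1 x y * y = i2 x y * x" if "(x,y) \<noteq> (0,0)" for x y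
  proof -
    have nz: "(i1 x y, i2 x y) \<noteq> (0,0)" and ip: "iota (pt x y) = pt (i1 x y) (i2 x y)"
      using iota_hrep that unfolding hrep_def by blast+
    have "pt (i1 x y) (i2 x y) = pt x y" using ip I by simp
    thus ?thesis using pt_eq[OF nz that] by simp
  qed
  have "ca*ce-cb*cd = 0" using e[of 1 0] by (simp add: i1_def i2_def)
  moreover have "cc*ce-cb*cg = 0" using e[of 0 1] by (simp add: i1_def i2_def)
  moreover have "cc*cd-ca*cg = 0" using e[of 1 1] calculation by (simp add: i1_def i2_def algebra_simps)
  ultimately have "DD = 0" unfolding DD_def by (simp add: algebra_simps power2_eq_square)
  thus False using DD_nz by simp
qed

lemma iota_fix_finite: "finite {s. iota s = id s}"
  by (rule conjunct1[OF hrep_agree_finite[OF iota_hrep id_hrep iota_ne_id]])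

lemma descent:
  assumes tm: "mobius t" and comm: "t \<circ> iota = iota \<circ> t"
  shows "\<exists>M. mobius M \<and> f \<circ> t = M \<circ> f"
proof -
  obtain At Bt where ht: "hrep 1 t At Bt" using mobius_hrep[OF tm] by blast
  have injt: "inj t" by (rule hrep1_inj[OF ht])
  have fibf: "finite {s. f s = w}" for w by (rule conjunct1[OF fiber])
  have fibft: "finite {s. f (t s) = w}" for w
  proof -
    have "{s. f (t s) = w} = t -` {s. f s = w}" by auto
    thus ?thesis using finite_vimageI[OF fibf injt] by simp
  qed
  have ft_iota: "f (t (iota s)) = f (t s)" for s
  proof -
    have "f (t (iota s)) = f (iota (t s))" using fun_cong[OF comm, of s] by simp
    also have "\<dots> = f (t s)" using fun_cong[OF f_iota, of "t s"] by simp
    finally show ?thesis .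
  qed
  have f_iota': "f (iota s) = f s" for s using fun_cong[OF f_iota, of s] by simp
  let ?Fix = "{s. iota s = id s}"
  have "\<exists>s. s \<notin> ?Fix" by (rule avoid_finite[OF iota_fix_finite])
  then obtain z1 where z1: "z1 \<notin> ?Fix" ..
  let ?B2 = "?Fix \<union> {s. f s = f z1} \<union> {s. f (t s) = f (t z1)}"
  have "finite ?B2" using iota_fix_finite fibf fibft by (simp only: finite_Un)
  hence "\<exists>s. s \<notin> ?B2" by (rule avoid_finite)
  then obtain z2 where z2: "z2 \<notin> ?B2" ..
  let ?B3 = "?B2 \<union> {s. f s = f z2} \<union> {s. f (t s) = f (t z2)}"
  have "finite ?B3" using \<open>finite ?B2\<close> fibf fibft by (simp only: finite_Un)
  hence "\<exists>s. s \<notin> ?B3" by (rule avoid_finite)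
  then obtain z3 where z3: "z3 \<notin> ?B3" ..
  have nf: "iota z1 \<noteq> z1" "iota z2 \<noteq> z2" "iota z3 \<noteq> z3" using z1 z2 z3 by auto
  have df: "f z1 \<noteq> f z2" "f z1 \<noteq> f z3" "f z2 \<noteq> f z3" using z2 z3 by auto
  have dft: "f (t z1) \<noteq> f (t z2)" "f (t z1) \<noteq> f (t z3)" "f (t z2) \<noteq> f (t z3)" using z2 z3 by auto
  obtain M where M: "mobius M" "M (f z1) = f (t z1)" "M (f z2) = f (t z2)" "M (f z3) = f (t z3)"
    using interp3[OF df dft] by blast
  obtain AM BM where hM: "hrep 1 M AM BM" using mobius_hrep[OF M(1)] by blast
  have h1: "hrep 2 (f \<circ> t) (\<lambda>x y. A (At x y) (Bt x y)) (\<lambda>x y. B (At x y) (Bt x y))"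
    using hrep_comp[OF f_hrep ht] by simp
  have h2: "hrep 2 (M \<circ> f) (\<lambda>x y. AM (A x y) (B x y)) (\<lambda>x y. BM (A x y) (B x y))"
    using hrep_comp[OF hM f_hrep] by simp
  have "f \<circ> t = M \<circ> f"
  proof (rule ccontr)
    assume ne: "f \<circ> t \<noteq> M \<circ> f"
    let ?S = "{s. (f \<circ> t) s = (M \<circ> f) s}"
    have fin: "finite ?S" and c4: "card ?S \<le> 2 + 2"
      using hrep_agree_finite[OF h1 h2 ne] by blast+
    have ag: "(f \<circ> t) z = (M \<circ> f) z \<and> (f \<circ> t) (iota z) = (M \<circ> f) (iota z)"
      if "M (f z) = f (t z)" for z
      using that ft_iota f_iota' by simp
    have sub: "{z1, z2, z3, iota z1, iota z2, iota z3} \<subseteq> ?S"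
      using ag[OF M(2)] ag[OF M(3)] ag[OF M(4)] by blast
    have d2: "iota z1 \<noteq> iota z2" "iota z1 \<noteq> iota z3" "iota z2 \<noteq> iota z3"
      "z1 \<noteq> iota z2" "z1 \<noteq> iota z3" "z2 \<noteq> iota z3"
      "z2 \<noteq> iota z1" "z3 \<noteq> iota z1" "z3 \<noteq> iota z2"
      "z1 \<noteq> z2" "z1 \<noteq> z3" "z2 \<noteq> z3"
      using df f_iota' by metis+
    have "card {z1, z2, z3, iota z1, iota z2, iota z3} = 6"
      using d2 nf by simp
    moreover have "card {z1, z2, z3, iota z1, iota z2, iota z3} \<le> card ?S"
      by (rule card_mono[OF fin sub])
    ultimately show False using c4 by simp
  qed
  thus ?thesis using M(1) by blast
qed

lemma id_Deck: "id \<in> Deck F"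
  using mobius_id by (simp add: Deck_def)


lemma not_klein1: "\<not> deck_group f \<cong> klein_four"
proof
  assume "deck_group f \<cong> klein_four"
  hence fin: "finite (Deck f)" and c: "card (Deck f) = 4" using iso_props by blast+
  have "\<exists>a b c. a \<in> Deck f \<and> b \<in> Deck f \<and> c \<in> Deck f \<and> a \<noteq> b \<and> a \<noteq> c \<and> b \<noteq> c"
  proof -
    have "Suc 2 \<le> card (Deck f)" using c by simp
    then obtain a B where "Deck f = insert a B" "a \<notin> B" "2 \<le> card B" "finite B"
      using card_le_Suc_iff fin by (metis finite_insert)
    moreover have "Suc 1 \<le> card B" using calculation by simp
    then obtain b C where "B = insert b C" "b \<notin> C" "1 \<le> card C"
      using card_le_Suc_iff by metis
    moreover obtain c where "c \<in> C" using \<open>1 \<le> card C\<close> by (metis card.empty ex_in_conv not_one_le_zero)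
    ultimately show ?thesis by blast
  qed
  thus False using deck_le2 by blast
qed

lemma step:
  assumes j: "2 \<le> j" and K: "deck_group (f ^^ Suc j) \<cong> klein_four"
  shows "Deck (f ^^ j) = Deck (f ^^ Suc j)"
proof -
  let ?G = "Deck (f ^^ Suc j)"
  have P: "finite ?G" "card ?G = 4" "\<forall>a\<in>?G. \<forall>b\<in>?G. a \<circ> b = b \<circ> a"
    "\<And>H. H \<subseteq> ?G \<Longrightarrow> id \<in> H \<Longrightarrow> (\<forall>a\<in>H. \<forall>b\<in>H. a \<circ> b \<in> H) \<Longrightarrow> 3 \<le> card H \<Longrightarrow> H = ?G"
    using iso_props[OF K] by blast+
  have fsub: "Deck f \<subseteq> ?G" using Deck_mono[of 1 "Suc j"] by simp
  have iG: "iota \<in> ?G" using iota_Deck fsub by blast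
  have idG: "id \<in> ?G" by (rule id_Deck)
  have "card {id, iota} = 2" using iota_ne_id by simp
  hence "card (?G - {id, iota}) \<ge> 2" using P(1,2) idG iG
    by (simp add: card_Diff_subset)
  hence "?G - {id, iota} \<noteq> {}" by (metis card.empty not_numeral_le_zero)
  then obtain t where t: "t \<in> ?G" "t \<noteq> id" "t \<noteq> iota" by blast
  have tm: "mobius t" and tinv: "f ^^ Suc j \<circ> t = f ^^ Suc j" using t(1) by (auto simp: Deck_def)
  have comm: "t \<circ> iota = iota \<circ> t" using P(3) t(1) iG by blast
  obtain M where M: "mobius M" "f \<circ> t = M \<circ> f" using descent[OF tm comm] by blast
  have fj: "f ^^ Suc j = f ^^ j \<circ> f" by (rule funpow_Suc_right)
  have "f ^^ j \<circ> M \<circ> f = f ^^ j \<circ> f"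
  proof -
    have "f ^^ j \<circ> M \<circ> f = f ^^ j \<circ> (f \<circ> t)" using M(2) by (simp add: comp_assoc)
    also have "\<dots> = f ^^ Suc j \<circ> t" using fj by (simp add: comp_assoc)
    also have "\<dots> = f ^^ j \<circ> f" using tinv fj by simp
    finally show ?thesis .
  qed
  have "f ^^ j \<circ> M = f ^^ j"
  proof
    fix w
    obtain s where s: "f s = w" using f_surj by blast
    show "(f ^^ j \<circ> M) w = (f ^^ j) w"
      using fun_cong[OF \<open>f ^^ j \<circ> M \<circ> f = f ^^ j \<circ> f\<close>, of s] s by simp
  qed
  hence MD: "M \<in> Deck (f ^^ j)" using M(1) by (simp add: Deck_def)
  let ?H = "Deck (f ^^ j)"
  have HG: "?H \<subseteq> ?G" by (rule Deck_sub_Suc)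
  have idH: "id \<in> ?H" by (rule id_Deck)
  have iH: "iota \<in> ?H" using iota_Deck Deck_mono[of 1 j] j by auto
  have clos: "\<forall>a\<in>?H. \<forall>b\<in>?H. a \<circ> b \<in> ?H" using Deck_comp by blast
  have finH: "finite ?H" using P(1) HG finite_subset by blast
  have three: "3 \<le> card ?H"
  proof -
    obtain x where x: "x \<in> ?H" "x \<noteq> id" "x \<noteq> iota"
    proof (cases "M = id")
      case True
      hence "f \<circ> t = f" using M(2) by simp
      hence "t \<in> Deck f" using tm by (simp add: Deck_def)
      hence False using deck_le2[OF id_Deck iota_Deck] t iota_ne_id by metis
      thus ?thesis ..
    next
      case Mid: False
      show ?thesis
      proof (cases "M = iota")
        case True
        have "f ^^ 2 \<circ> t = f \<circ> (f \<circ> t)" by (simp add: numeral_2_eq_2 comp_assoc)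
        also have "\<dots> = f \<circ> iota \<circ> f" using M(2) True by (simp add: comp_assoc)
        also have "\<dots> = f ^^ 2" using f_iota by (simp add: numeral_2_eq_2)
        finally have "t \<in> Deck (f ^^ 2)" using tm by (simp add: Deck_def)
        hence "t \<in> ?H" using Deck_mono[OF j] by blast
        thus ?thesis using that t by blast
      next
        case False
        thus ?thesis using that MD Mid by blast
      qed
    qed
    have "{id, iota, x} \<subseteq> ?H" using x idH iH by blast
    moreover have "card {id, iota, x} = 3" using x iota_ne_id by auto
    ultimately show ?thesis using card_mono[OF finH] by metis
  qed
  show ?thesis by (rule P(4)[OF HG idH clos three])
qed
end


theorem mainTheorem11:
  fixes f :: "rsphere \<Rightarrow> rsphere"
  assumes "rat_map_deg 2 f"
    and "\<exists>k::nat. k \<ge> 1 \<and> deck_group (f ^^ k) \<cong> klein_four"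
  shows "(LEAST k::nat. k \<ge> 1 \<and> deck_group (f ^^ k) \<cong> klein_four) = 2"
proof -
  obtain p q where pq: "q \<noteq> 0" "coprime p q" "max (degree p) (degree q) = 2" "f = rat_eval p q"
    using assms(1) unfolding rat_map_deg_def by blast
  interpret quad p q f using pq by unfold_locales
  have down: "deck_group (f ^^ k) \<cong> klein_four \<Longrightarrow> deck_group (f ^^ 2) \<cong> klein_four" if "2 \<le> k" for k
    using that
  proof (induction k rule: dec_induct)
    case base thus ?case .
  next
    case (step j)
    have "Deck (f ^^ j) = Deck (f ^^ Suc j)" by (rule quad.step[OF quad_axioms step(1) step(4)])
    hence eq: "deck_group (f ^^ j) = deck_group (f ^^ Suc j)" by (simp add: deck_group_def)
    have "deck_group (f ^^ j) \<cong> klein_four" unfolding eq by (rule step(4))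
    thus ?case by (rule step(3))
  qed
  obtain k where k: "k \<ge> 1" "deck_group (f ^^ k) \<cong> klein_four" using assms(2) by blast
  have k1: "k \<noteq> 1" using k not_klein1 by auto
  have P2: "deck_group (f ^^ 2) \<cong> klein_four" using down[of k] k k1 by simp
  show ?thesis
  proof (rule Least_equality)
    show "2 \<ge> (1::nat) \<and> deck_group (f ^^ 2) \<cong> klein_four" using P2 by simp
  next
    fix m :: nat assume m: "m \<ge> 1 \<and> deck_group (f ^^ m) \<cong> klein_four"
    hence "m \<noteq> 1" using not_klein1 by auto
    thus "2 \<le> m" using m by simp
  qed
qed

end
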